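(* Let $1\le k\le n$ and let $\lambda=(\lambda_1,\dots,\lambda_n)$ be a partition with $\lambda_{n-k+1}=\dots=\lambda_n=0$. Let $x=(x_1,\dots,x_{n-k},t^{k-1},t^{k-2},\dots,t,1)\in\mathbb{C}^n$, $\hat\lambda=(\lambda_1,\dots,\lambda_{n-k})$ and $\hat x=(x_1,\dots,x_{n-k})$. Then $$W_\lambda(x;q,p,t,a,b)=W_{\hat\lambda}(\hat xt^{-k};q,p,t,at^{2k},bt^{k}).$$
   Context: Fix $|p|<1$; parameters generic. $E(x)=(x;p)_\infty(p/x;p)_\infty$. For integer $m\ge0$, $(a)_m=\prod_{k=0}^{m-1}E(aq^k)$, for $m<0$, $(a)_m=1/(aq^m)_{-m}$; for a partition $\lambda$ with $N$ parts $(a)_\lambda=\prod_{i=1}^N(at^{1-i})_{\lambda_i}$; several arguments denote products; integer subscripts denote the single-integer symbol. Scalars multiply tuples componentwise. $W$ functions for $N$-part partitions (here $N=n$ or $N=n-k$, the number of variables): for $\lambda_1\ge\mu_1\ge\dots\ge\lambda_N\ge\mu_N$, $\lambda_{N+1}=\mu_{N+1}=0$, $H_{\lambda/\mu}(q,p,t,b)=\prod_{1\le i<j\le N}\Big\{\frac{(q^{\mu_i-\mu_{j-1}}t^{j-i})_{\mu_{j-1}-\lambda_j}(q^{\lambda_i+\lambda_j}t^{3-j-i}b)_{\mu_{j-1}-\lambda_j}}{(q^{\mu_i-\mu_{j-1}+1}t^{j-i-1})_{\mu_{j-1}-\lambda_j}(q^{\lambda_i+\lambda_j+1}t^{2-j-i}b)_{\mu_{j-1}-\lambda_j}}\frac{(q^{\lambda_i-\mu_{j-1}+1}t^{j-i-1})_{\mu_{j-1}-\lambda_j}}{(q^{\lambda_i-\mu_{j-1}}t^{j-i})_{\mu_{j-1}-\lambda_j}}\Big\}\prod_{1\le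 i<j-1\le N}\frac{(q^{\mu_i+\lambda_j+1}t^{1-j-i}b)_{\mu_{j-1}-\lambda_j}}{(q^{\mu_i+\lambda_j}t^{2-j-i}b)_{\mu_{j-1}-\lambda_j}}$; for $x\in\mathbb{C}$, $W_{\lambda/\mu}(x;q,p,t,a,b)=H_{\lambda/\mu}\frac{(x^{-1},ax)_\lambda(qbx/t,qb/(axt))_\mu}{(x^{-1},ax)_\mu(qbx,qb/(ax))_\lambda}\prod_{i=1}^N\frac{E(bt^{1-2i}q^{2\mu_i})}{E(bt^{1-2i})}\frac{(bt^{1-2i})_{\mu_i+\lambda_{i+1}}}{(bqt^{-2i})_{\mu_i+\lambda_{i+1}}}t^{i(\mu_i-\lambda_{i+1})}$ (zero if the interlacing fails); recursively $W_{\lambda/\mu}(y,z_1,\dots,z_\ell;q,p,t,a,b)=\sum_\nu W_{\lambda/\nu}(yt^{-\ell};q,p,t,at^{2\ell},bt^\ell)W_{\nu/\mu}(z_1,\dots,z_\ell;q,p,t,a,b)$ over $\nu$ with $\lambda_1\ge\nu_1\ge\dots\ge\lambda_N\ge\nu_N\ge0$; $W_\lambda=W_{\lambda/0}$, a function of $N$ variables. *)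

theory Defs
  imports "HOL-Analysis.Analysis"
begin

definition qpinf :: "complex \<Rightarrow> complex \<Rightarrow> complex" where
  "qpinf p x = (\<Prod>k. (1 - x * p ^ k))"

definition Eth :: "complex \<Rightarrow> complex \<Rightarrow> complex" where
  "Eth p x = qpinf p x * qpinf p (p / x)"

definition epoch :: "complex \<Rightarrow> complex \<Rightarrow> complex \<Rightarrow> int \<Rightarrow> complex" where
  "epoch p q a m =
     (if 0 \<le> m then (\<Prod>k<nat m. Eth p (a * q ^ k))
      else 1 / (\<Prod>k<nat (- m). Eth p ((a * q powi m) * q ^ k)))"

text \<open>Partitions with N parts are functions on indices 1..N; outside they read as 0
  (so that lambda_{N+1} = mu_{N+1} = 0).\<close>
definition pt :: "nat \<Rightarrow> (nat \<Rightarrow> nat) \<Rightarrow> nat \<Rightarrow> int" where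
  "pt N lam i = (if 1 \<le> i \<and> i \<le> N then int (lam i) else 0)"

definition epochP :: "complex \<Rightarrow> complex \<Rightarrow> complex \<Rightarrow> nat \<Rightarrow> complex \<Rightarrow> (nat \<Rightarrow> nat) \<Rightarrow> complex" where
  "epochP p q t N a lam = (\<Prod>i\<in>{1..N}. epoch p q (a * t powi (1 - int i)) (pt N lam i))"

definition interlace :: "nat \<Rightarrow> (nat \<Rightarrow> nat) \<Rightarrow> (nat \<Rightarrow> nat) \<Rightarrow> bool" where
  "interlace N lam mu \<longleftrightarrow> (\<forall>i\<in>{1..N}. pt N lam (i + 1) \<le> pt N mu i \<and> pt N mu i \<le> pt N lam i)"

definition Hfac :: "complex \<Rightarrow> complex \<Rightarrow> complex \<Rightarrow> complex \<Rightarrow> nat \<Rightarrow> (nat \<Rightarrow> nat) \<Rightarrow> (nat \<Rightarrow> nat) \<Rightarrow> complex" where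
  "Hfac q p t b N lam mu =
    (let L = pt N lam; M = pt N mu; ep = epoch p q; Q = (\<lambda>r. q powi r); T = (\<lambda>s. t powi s) in
     (\<Prod>i\<in>{1..N}. \<Prod>j\<in>{i+1..N}.
        let m = M (j - 1) - L j; ii = int i; jj = int j in
        (ep (Q (M i - M (j - 1)) * T (jj - ii)) m * ep (Q (L i + L j) * T (3 - jj - ii) * b) m)
        / (ep (Q (M i - M (j - 1) + 1) * T (jj - ii - 1)) m * ep (Q (L i + L j + 1) * T (2 - jj - ii) * b) m)
        * (ep (Q (L i - M (j - 1) + 1) * T (jj - ii - 1)) m / ep (Q (L i - M (j - 1)) * T (jj - ii)) m))
     * (\<Prod>i\<in>{1..N}. \<Prod>j\<in>{i+2..N+1}.
        let m = M (j - 1) - L j; ii = int i; jj = int j in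
        ep (Q (M i + L j + 1) * T (1 - jj - ii) * b) m / ep (Q (M i + L j) * T (2 - jj - ii) * b) m))"

definition W1 :: "complex \<Rightarrow> complex \<Rightarrow> complex \<Rightarrow> nat \<Rightarrow> complex \<Rightarrow> complex \<Rightarrow> complex
                   \<Rightarrow> (nat \<Rightarrow> nat) \<Rightarrow> (nat \<Rightarrow> nat) \<Rightarrow> complex" where
  "W1 q p t N x a b lam mu =
    (if interlace N lam mu then
      (let L = pt N lam; M = pt N mu; P = epochP p q t N; T = (\<lambda>s. t powi s) in
       Hfac q p t b N lam mu
       * (P (inverse x) lam * P (a * x) lam * P (q * b * x / t) mu * P (q * b / (a * x * t)) mu)
       / (P (inverse x) mu * P (a * x) mu * P (q * b * x) lam * P (q * b / (a * x)) lam)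
       * (\<Prod>i\<in>{1..N}. let ii = int i in
           Eth p (b * T (1 - 2 * ii) * q powi (2 * M i)) / Eth p (b * T (1 - 2 * ii))
           * (epoch p q (b * T (1 - 2 * ii)) (M i + L (i + 1))
              / epoch p q (b * q * T (- 2 * ii)) (M i + L (i + 1)))
           * T (ii * (M i - L (i + 1)))))
     else 0)"

definition interl_set :: "nat \<Rightarrow> (nat \<Rightarrow> nat) \<Rightarrow> (nat \<Rightarrow> nat) set" where
  "interl_set N lam = {nu. (\<forall>i. (i < 1 \<or> N < i) \<longrightarrow> nu i = 0) \<and> interlace N lam nu}"

fun Wm :: "complex \<Rightarrow> complex \<Rightarrow> complex \<Rightarrow> nat \<Rightarrow> complex list \<Rightarrow> complex \<Rightarrow> complex
             \<Rightarrow> (nat \<Rightarrow> nat) \<Rightarrow> (nat \<Rightarrow> nat) \<Rightarrow> complex" where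
  "Wm q p t N [] a b lam mu = (if (\<forall>i\<in>{1..N}. pt N lam i = pt N mu i) then 1 else 0)"
| "Wm q p t N (y # zs) a b lam mu =
     (\<Sum>nu\<in>interl_set N lam.
        W1 q p t N (y * t powi (- int (length zs))) (a * t powi (2 * int (length zs)))
           (b * t powi (int (length zs))) lam nu
        * Wm q p t N zs a b nu mu)"

text \<open>Genericity: q,t,a,b,x_i nonzero, and no nontrivial Laurent monomial in q,t,a,b,x_i
  lies in p^Z (so no E-factor with a nontrivial argument vanishes).\<close>
definition generic_params :: "complex \<Rightarrow> complex \<Rightarrow> complex \<Rightarrow> complex \<Rightarrow> complex \<Rightarrow> complex list \<Rightarrow> bool" where
  "generic_params p q t a b xs \<longleftrightarrow>
     q \<noteq> 0 \<and> t \<noteq> 0 \<and> a \<noteq> 0 \<and> b \<noteq> 0 \<and> (\<forall>x\<in>set xs. x \<noteq> 0) \<and>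
     (\<forall>(r::int) (s::int) (\<alpha>::int) (\<beta>::int) (\<gamma>::nat \<Rightarrow> int) (m::int).
        (r \<noteq> 0 \<or> s \<noteq> 0 \<or> \<alpha> \<noteq> 0 \<or> \<beta> \<noteq> 0 \<or> (\<exists>i<length xs. \<gamma> i \<noteq> 0)) \<longrightarrow>
        q powi r * t powi s * a powi \<alpha> * b powi \<beta> * (\<Prod>i<length xs. (xs ! i) powi \<gamma> i) \<noteq> p powi m)"

end

theory Submission
  imports Defs
begin

lemma qpinf_conv:
  fixes p x :: complex
  assumes "norm p < 1"
  shows "convergent_prod (\<lambda>k. 1 - x * p ^ k)"
proof -
  have "summable (\<lambda>k. norm x * norm p ^ k)"
    using assms by (intro summable_mult summable_geometric) simp
  moreover have "(\<lambda>k. norm ((1 - x * p ^ k) - 1)) = (\<lambda>k. norm x * norm p ^ k)"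
    by (simp add: fun_eq_iff norm_minus_commute norm_mult norm_power)
  ultimately have "summable (\<lambda>k. norm ((1 - x * p ^ k) - 1))" by simp
  then show ?thesis
    by (intro abs_convergent_prod_imp_convergent_prod summable_imp_abs_convergent_prod)
qed

lemma qpinf_nz:
  assumes "norm p < 1" "\<And>k. x * p ^ k \<noteq> 1"
  shows "qpinf p x \<noteq> 0"
  unfolding qpinf_def
  by (rule prodinf_nonzero[OF qpinf_conv[OF assms(1)]]) (use assms(2) in auto)

lemma qpinf_one: "norm p < 1 \<Longrightarrow> qpinf p 1 = 0"
  unfolding qpinf_def
  using has_prod_zeroI[OF convergent_prod_has_prod[OF qpinf_conv], of p 1 0] by simp

lemma Eth_one: "norm p < 1 \<Longrightarrow> Eth p 1 = 0"
  by (simp add: Eth_def qpinf_one)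

lemma Eth_nz:
  assumes "norm p < 1" "x \<noteq> 0" "\<And>m. x \<noteq> p powi m"
  shows "Eth p x \<noteq> 0"
proof -
  have a: "x * p ^ k \<noteq> 1" for k
  proof
    assume h: "x * p ^ k = 1"
    show False
    proof (cases "p = 0")
      case True
      then have "x = p powi 0" using h by (cases k) auto
      then show False using assms(3) by blast
    next
      case False
    then have "x = p powi (- int k)" using h
      by (simp add: power_int_minus field_simps)
    then show False using assms(3) by blast
    qed
  qed
  have b: "p / x * p ^ k \<noteq> 1" for k
  proof
    assume h: "p / x * p ^ k = 1"
    then have "x = p ^ Suc k" using assms(2) by (simp add: field_simps)
    then have "x = p powi (int (Suc k))" by (simp only: power_int_of_nat)
    then show False using assms(3) by blast
  qed
  show ?thesis unfolding Eth_def using qpinf_nz[OF assms(1) a] qpinf_nz[OF assms(1) b] by simp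
qed

lemma epoch_zero[simp]: "epoch p q a 0 = 1"
  by (simp add: epoch_def)

lemma pt_restrict:
  assumes "Nk \<le> n" "\<forall>i. Nk < i \<and> i \<le> n \<longrightarrow> lam i = 0"
  shows "pt n lam = pt Nk lam"
  using assms by (auto simp: pt_def fun_eq_iff)

lemma pt_nonneg: "0 \<le> pt N lam i"
  by (simp add: pt_def)

lemma pt_out: "Nk < i \<Longrightarrow> pt Nk lam i = 0"
  by (simp add: pt_def)

lemma prod_restrict0:
  fixes g :: "nat \<Rightarrow> complex"
  assumes "Nk \<le> n" "\<And>i. Nk < i \<Longrightarrow> i \<le> n \<Longrightarrow> g i = 1"
  shows "(\<Prod>i\<in>{1..n}. g i) = (\<Prod>i\<in>{1..Nk}. g i)"
  using assms by (intro prod.mono_neutral_right) auto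

lemma prod_restrict1:
  fixes f :: "nat \<Rightarrow> nat \<Rightarrow> complex"
  assumes "Nk \<le> n" "\<And>i j. Nk < j \<Longrightarrow> j \<le> n \<Longrightarrow> f i j = 1"
  shows "(\<Prod>i\<in>{1..n}. \<Prod>j\<in>{i+1..n}. f i j) = (\<Prod>i\<in>{1..Nk}. \<Prod>j\<in>{i+1..Nk}. f i j)"
proof -
  have "(\<Prod>j\<in>{i+1..n}. f i j) = (\<Prod>j\<in>{i+1..Nk}. f i j)" for i
    using assms by (intro prod.mono_neutral_right) auto
  then have "(\<Prod>i\<in>{1..n}. \<Prod>j\<in>{i+1..n}. f i j) = (\<Prod>i\<in>{1..n}. \<Prod>j\<in>{i+1..Nk}. f i j)"
    by simp
  also have "\<dots> = (\<Prod>i\<in>{1..Nk}. \<Prod>j\<in>{i+1..Nk}. f i j)"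
    using assms by (intro prod_restrict0) auto
  finally show ?thesis .
qed

lemma prod_restrict2:
  fixes f :: "nat \<Rightarrow> nat \<Rightarrow> complex"
  assumes "Nk \<le> n" "\<And>i j. Nk + 1 < j \<Longrightarrow> j \<le> n + 1 \<Longrightarrow> f i j = 1"
  shows "(\<Prod>i\<in>{1..n}. \<Prod>j\<in>{i+2..n+1}. f i j) = (\<Prod>i\<in>{1..Nk}. \<Prod>j\<in>{i+2..Nk+1}. f i j)"
proof -
  have "(\<Prod>j\<in>{i+2..n+1}. f i j) = (\<Prod>j\<in>{i+2..Nk+1}. f i j)" for i
    using assms by (intro prod.mono_neutral_right) auto
  then have "(\<Prod>i\<in>{1..n}. \<Prod>j\<in>{i+2..n+1}. f i j) = (\<Prod>i\<in>{1..n}. \<Prod>j\<in>{i+2..Nk+1}. f i j)"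
    by simp
  also have "\<dots> = (\<Prod>i\<in>{1..Nk}. \<Prod>j\<in>{i+2..Nk+1}. f i j)"
    using assms by (intro prod_restrict0) auto
  finally show ?thesis .
qed

lemma epochP_restrict:
  assumes "Nk \<le> n" "\<forall>i. Nk < i \<and> i \<le> n \<longrightarrow> lam i = 0"
  shows "epochP p q t n a lam = epochP p q t Nk a lam"
  unfolding epochP_def pt_restrict[OF assms]
  using assms(1) by (intro prod_restrict0) (auto simp: pt_out)

lemma Hfac_restrict:
  assumes "Nk \<le> n" "\<forall>i. Nk < i \<and> i \<le> n \<longrightarrow> lam i = 0"
    "\<forall>i. Nk < i \<and> i \<le> n \<longrightarrow> mu i = 0" "pt Nk mu Nk = 0"
  shows "Hfac q p t b n lam mu = Hfac q p t b Nk lam mu"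
proof -
  have M0: "pt Nk mu i = 0" if "Nk \<le> i" for i
    using that assms(4) pt_out[of Nk i mu] by (cases "i = Nk") auto
  show ?thesis
    unfolding Hfac_def Let_def pt_restrict[OF assms(1,2)] pt_restrict[OF assms(1,3)]
    apply (rule arg_cong2[where f="(*)"])
     apply (rule prod_restrict1[OF assms(1)])
     apply (simp add: pt_out M0)
    apply (rule prod_restrict2[OF assms(1)])
    apply (simp add: pt_out M0)
    done
qed

lemma interlace_restrict:
  assumes "Nk \<le> n" "\<forall>i. Nk < i \<and> i \<le> n \<longrightarrow> lam i = 0"
    "\<forall>i. Nk < i \<and> i \<le> n \<longrightarrow> mu i = 0"
  shows "interlace n lam mu = interlace Nk lam mu"
  unfolding interlace_def pt_restrict[OF assms(1,2)] pt_restrict[OF assms(1,3)]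
  using assms(1) by (auto simp: pt_out)

lemma W1_restrict:
  assumes "Nk \<le> n" "\<forall>i. Nk < i \<and> i \<le> n \<longrightarrow> lam i = 0"
    "\<forall>i. Nk < i \<and> i \<le> n \<longrightarrow> mu i = 0" "pt Nk mu Nk = 0"
    "\<And>i::nat. Eth p (b * t powi (1 - 2 * int i)) \<noteq> 0"
  shows "W1 q p t n x a b lam mu = W1 q p t Nk x a b lam mu"
proof -
  have M0: "pt Nk mu i = 0" if "Nk \<le> i" for i
    using that assms(4) pt_out[of Nk i mu] by (cases "i = Nk") auto
  have E: "epochP p q t n c lam = epochP p q t Nk c lam" for c
    by (rule epochP_restrict[OF assms(1,2)])
  have E2: "epochP p q t n c mu = epochP p q t Nk c mu" for c
    by (rule epochP_restrict[OF assms(1,3)])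
  show ?thesis
    unfolding W1_def Let_def E E2 Hfac_restrict[OF assms(1-4)] interlace_restrict[OF assms(1-3)]
      pt_restrict[OF assms(1,2)] pt_restrict[OF assms(1,3)]
    apply (rule if_cong[OF refl _ refl])
    apply (rule arg_cong2[where f="(*)"], rule refl)
    apply (rule prod_restrict0[OF assms(1)])
    using assms(5) by (simp add: pt_out M0)
qed


lemma W1_zero:
  assumes "\<forall>i. pt N lam i = 0" "\<forall>i. pt N mu i = 0"
    "\<And>i::nat. Eth p (b * t powi (1 - 2 * int i)) \<noteq> 0"
  shows "W1 q p t N x a b lam mu = 1"
proof -
  have hl: "pt N lam = (\<lambda>_. 0)" "pt N mu = (\<lambda>_. 0)" using assms(1,2) by auto
  show ?thesis
    unfolding W1_def Hfac_def epochP_def interlace_def Let_def hl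
    using assms(3) by simp
qed

lemma W1_vanish:
  assumes "norm p < 1" "pt N lam 1 \<noteq> 0"
  shows "W1 q p t N 1 a b lam mu = 0"
proof -
  have N: "1 \<le> N" using assms(2) by (simp add: pt_def split: if_splits)
  have pos: "0 < nat (pt N lam 1)" using assms(2) pt_nonneg[of N lam 1] by simp
  have "epoch p q (1 * t powi (1 - int 1)) (pt N lam 1) = 0"
    unfolding epoch_def using pos pt_nonneg[of N lam 1] Eth_one[OF assms(1)]
    by (auto intro!: prod_zero bexI[of _ 0])
  then have "epochP p q t N (inverse 1) lam = 0"
    unfolding epochP_def using N by (auto intro!: prod_zero bexI[of _ 1])
  then show ?thesis unfolding W1_def Let_def by simp
qed

lemma Wm_vanish:
  "\<forall>nu. (\<exists>j. length zs < j \<and> pt N nu j \<noteq> 0) \<longrightarrow> Wm q p t N zs a b nu (\<lambda>_. 0) = 0"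
proof (induction zs)
  case Nil
  show ?case
  proof (intro allI impI)
    fix nu assume "\<exists>j. length [] < j \<and> pt N nu j \<noteq> 0"
    then obtain j where "pt N nu j \<noteq> 0" by auto
    then have "j \<in> {1..N}" "pt N nu j \<noteq> pt N (\<lambda>_. 0) j" by (auto simp: pt_def split: if_splits)
    then show "Wm q p t N [] a b nu (\<lambda>_. 0) = 0" by auto
  qed
next
  case (Cons y zs)
  show ?case
  proof (intro allI impI)
    fix nu assume "\<exists>j. length (y # zs) < j \<and> pt N nu j \<noteq> 0"
    then obtain j where j: "Suc (length zs) < j" "pt N nu j \<noteq> 0" by auto
    have jN: "j \<le> N" using j(2) by (simp add: pt_def split: if_splits)
    have "Wm q p t N zs a b rho (\<lambda>_. 0) = 0" if "rho \<in> interl_set N nu" for rho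
    proof -
      obtain i where i: "j = Suc i" using j by (cases j) auto
      have "i \<in> {1..N}" using i j jN by auto
      then have "pt N nu (Suc i) \<le> pt N rho i"
        using that unfolding interl_set_def interlace_def by auto
      then have "pt N rho i \<noteq> 0" using j(2) i pt_nonneg[of N nu j] by auto
      moreover have "length zs < i" using i j by auto
      ultimately show ?thesis using Cons.IH by blast
    qed
    then show "Wm q p t N (y # zs) a b nu (\<lambda>_. 0) = 0" by simp
  qed
qed


lemma tail_Suc: "map (\<lambda>j. t ^ (Suc k - 1 - j)) [0..<Suc k] = t ^ k # map (\<lambda>j. t ^ (k - 1 - j)) [0..<k]"
  by (simp add: upt_conv_Cons map_Suc_upt[symmetric] del: upt_Suc)

lemma Wm_tail:
  fixes t b :: complex
  assumes p: "norm p < 1" and tnz: "t \<noteq> 0"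
    and Eb: "\<And>s s'. Eth p (b * t powi s * t powi s') \<noteq> 0"
  shows "\<forall>nu. Wm q p t N (map (\<lambda>j. t ^ (k - 1 - j)) [0..<k]) a b nu (\<lambda>_. 0)
           = (if \<forall>i\<in>{1..N}. pt N nu i = 0 then 1 else 0)"
proof (induction k)
  case 0
  then show ?case by (simp add: pt_def)
next
  case (Suc k)
  show ?case
  proof
    fix nu
    let ?a = "a * t powi (2 * int k)" and ?b = "b * t powi int k"
    have one: "t ^ k * t powi (- int k) = 1" using tnz by (simp add: power_int_minus)
    have "Wm q p t N (map (\<lambda>j. t ^ (Suc k - 1 - j)) [0..<Suc k]) a b nu (\<lambda>_. 0)
       = (\<Sum>rho\<in>interl_set N nu. W1 q p t N 1 ?a ?b nu rho *
            (if \<forall>i\<in>{1..N}. pt N rho i = 0 then 1 else 0))"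
      unfolding tail_Suc using Suc.IH one by simp
    also have "\<dots> = (if \<forall>i\<in>{1..N}. pt N nu i = 0 then 1 else 0)"
    proof (cases "\<forall>i\<in>{1..N}. pt N nu i = 0")
      case True
      have nu0: "\<forall>i. pt N nu i = 0" using True by (auto simp: pt_def)
      have nuz: "nu i = 0" if "1 \<le> i" "i \<le> N" for i using True that by (auto simp: pt_def)
      have "interl_set N nu = {\<lambda>_. 0}"
      proof
        show "interl_set N nu \<subseteq> {\<lambda>_. 0}"
        proof
          fix rho assume r: "rho \<in> interl_set N nu"
          have "rho i = 0" for i
          proof (cases "1 \<le> i \<and> i \<le> N")
            case True
            then have "pt N rho i \<le> pt N nu i" using r unfolding interl_set_def interlace_def by auto
            then show ?thesis using nu0[rule_format, of i] True by (simp add: pt_def split: if_splits)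
          next
            case False then show ?thesis using r unfolding interl_set_def by (auto simp: not_le)
          qed
          then show "rho \<in> {\<lambda>_. 0}" by auto
        qed
        show "{\<lambda>_. 0} \<subseteq> interl_set N nu"
          using nuz by (auto simp: interl_set_def interlace_def pt_def)
      qed
      moreover have "W1 q p t N 1 ?a ?b nu (\<lambda>_. 0) = 1"
        apply (rule W1_zero[OF nu0])
         apply (simp add: pt_def)
        apply (rule Eb)
        done
      ultimately show ?thesis using True by (simp add: pt_def)
    next
      case False
      have "W1 q p t N 1 ?a ?b nu rho * (if \<forall>i\<in>{1..N}. pt N rho i = 0 then 1 else 0) = 0"
        if r: "rho \<in> interl_set N nu" for rho
      proof (cases "\<forall>i\<in>{1..N}. pt N rho i = 0")
        case True
        have "pt N nu 1 \<noteq> 0"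
        proof
          assume h: "pt N nu 1 = 0"
          have "pt N nu i = 0" if iN: "i \<in> {1..N}" for i
          proof (cases "i = 1")
            case True then show ?thesis using h by simp
          next
            case False
            then obtain i' where i': "i = Suc i'" "i' \<in> {1..N}" using iN False by (cases i) auto
            then have "pt N nu (Suc i') \<le> pt N rho i'" using r unfolding interl_set_def interlace_def by auto
            then show ?thesis using True i' pt_nonneg[of N nu i] by auto
          qed
          then show False using False by blast
        qed
        then show ?thesis using W1_vanish[OF p] by simp
      next
        case False then show ?thesis by auto
      qed
      then have "(\<Sum>rho\<in>interl_set N nu. W1 q p t N 1 ?a ?b nu rho *
            (if \<forall>i\<in>{1..N}. pt N rho i = 0 then 1 else 0)) = 0"
        by (intro sum.neutral) blast
      then show ?thesis using False by (simp only: if_False)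
    qed
    finally show "Wm q p t N (map (\<lambda>j. t ^ (Suc k - 1 - j)) [0..<Suc k]) a b nu (\<lambda>_. 0)
           = (if \<forall>i\<in>{1..N}. pt N nu i = 0 then 1 else 0)" .
  qed
qed


lemma Wm_main:
  fixes t b :: complex
  assumes p: "norm p < 1" and tnz: "t \<noteq> 0" and kn: "k \<le> n"
    and Eb: "\<And>s s'. Eth p (b * t powi s * t powi s') \<noteq> 0"
  shows "\<forall>lam::nat\<Rightarrow>nat. (\<forall>i. n - k < i \<and> i \<le> n \<longrightarrow> lam i = 0) \<longrightarrow> length ys \<le> n - k \<longrightarrow>
     Wm q p t n (ys @ map (\<lambda>j. t ^ (k - 1 - j)) [0..<k]) a b lam (\<lambda>_. 0)
     = Wm q p t (n - k) (map (\<lambda>z. z * t powi (- int k)) ys) (a * t powi (2 * int k))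
         (b * t powi (int k)) lam (\<lambda>_. 0)"
proof (induction ys)
  case Nil
  show ?case
  proof (intro allI impI)
    fix lam :: "nat \<Rightarrow> nat" assume lz: "\<forall>i. n - k < i \<and> i \<le> n \<longrightarrow> lam i = 0"
    have ptr: "pt n lam = pt (n - k) lam" by (rule pt_restrict) (use lz in auto)
    have "(\<forall>i\<in>{1..n}. pt (n - k) lam i = 0) = (\<forall>i\<in>{1..n - k}. pt (n - k) lam i = pt (n - k) (\<lambda>_. 0) i)"
      by (auto simp: pt_def)
    then show "Wm q p t n ([] @ map (\<lambda>j. t ^ (k - 1 - j)) [0..<k]) a b lam (\<lambda>_. 0)
     = Wm q p t (n - k) (map (\<lambda>z. z * t powi (- int k)) []) (a * t powi (2 * int k))
         (b * t powi (int k)) lam (\<lambda>_. 0)"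
      using Wm_tail[OF p tnz Eb, of q n k a] ptr by simp
  qed
next
  case (Cons y ys)
  show ?case
  proof (intro allI impI)
    fix lam :: "nat \<Rightarrow> nat" assume lz: "\<forall>i. n - k < i \<and> i \<le> n \<longrightarrow> lam i = 0"
      and len: "length (y # ys) \<le> n - k"
    define Nk where "Nk = n - k"
    have Nkn: "Nk \<le> n" using Nk_def by simp
    have lz': "\<forall>i. Nk < i \<and> i \<le> n \<longrightarrow> lam i = 0" using lz Nk_def by simp
    have ptr: "pt n lam = pt Nk lam" by (rule pt_restrict[OF Nkn lz'])
    have set: "interl_set n lam = interl_set Nk lam"
    proof (intro set_eqI iffI)
      fix nu :: "nat \<Rightarrow> nat" assume nu: "nu \<in> interl_set n lam"
      have nz: "\<forall>i. Nk < i \<and> i \<le> n \<longrightarrow> nu i = 0"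
      proof (intro allI impI)
        fix i assume i: "Nk < i \<and> i \<le> n"
        then have "pt n nu i \<le> pt n lam i" using nu Nkn unfolding interl_set_def interlace_def by auto
        then show "nu i = 0" using i ptr by (simp add: pt_def)
      qed
      show "nu \<in> interl_set Nk lam"
        unfolding interl_set_def
      proof (intro CollectI conjI allI impI)
        fix i assume "i < 1 \<or> Nk < i"
        then show "nu i = 0" using nu nz unfolding interl_set_def by (cases "i \<le> n") auto
      next
        show "interlace Nk lam nu"
          using nu interlace_restrict[OF Nkn lz' nz] unfolding interl_set_def by auto
      qed
    next
      fix nu :: "nat \<Rightarrow> nat" assume nu: "nu \<in> interl_set Nk lam"
      have nz: "\<forall>i. Nk < i \<and> i \<le> n \<longrightarrow> nu i = 0" using nu unfolding interl_set_def by auto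
      show "nu \<in> interl_set n lam"
        using nu nz interlace_restrict[OF Nkn lz' nz] Nkn unfolding interl_set_def
        by auto
    qed
    let ?T = "map (\<lambda>j. t ^ (k - 1 - j)) [0..<k]"
    let ?m = "length ys"
    have lT: "length (ys @ ?T) = ?m + k" by simp
    have hx: "t powi (- int (?m + k)) = t powi (- int k) * t powi (- int ?m)"
      using tnz by (simp add: power_int_add[symmetric] add.commute)
    have ha: "t powi (2 * int (?m + k)) = t powi (2 * int k) * t powi (2 * int ?m)"
      using tnz by (simp add: power_int_add[symmetric] add.commute distrib_left)
    have hb: "t powi (int (?m + k)) = t powi (int k) * t powi (int ?m)"
      by (simp only: of_nat_add[symmetric] power_int_of_nat power_add mult.commute)
    have termeq: "W1 q p t n (y * t powi (- int (length (ys @ ?T)))) (a * t powi (2 * int (length (ys @ ?T))))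
           (b * t powi int (length (ys @ ?T))) lam nu * Wm q p t n (ys @ ?T) a b nu (\<lambda>_. 0)
        = W1 q p t Nk (y * t powi (- int k) * t powi (- int (length (map (\<lambda>z. z * t powi (- int k)) ys))))
           (a * t powi (2 * int k) * t powi (2 * int (length (map (\<lambda>z. z * t powi (- int k)) ys))))
           (b * t powi int k * t powi int (length (map (\<lambda>z. z * t powi (- int k)) ys))) lam nu
          * Wm q p t Nk (map (\<lambda>z. z * t powi (- int k)) ys) (a * t powi (2 * int k))
         (b * t powi (int k)) nu (\<lambda>_. 0)"
      if nu: "nu \<in> interl_set Nk lam" for nu :: "nat \<Rightarrow> nat"
    proof -
      have nz: "\<forall>i. Nk < i \<and> i \<le> n \<longrightarrow> nu i = 0" using nu unfolding interl_set_def by auto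
      have IH: "Wm q p t n (ys @ ?T) a b nu (\<lambda>_. 0) = Wm q p t Nk (map (\<lambda>z. z * t powi (- int k)) ys) (a * t powi (2 * int k))
         (b * t powi (int k)) nu (\<lambda>_. 0)"
        using Cons.IH nz len unfolding Nk_def by simp
      show ?thesis
      proof (cases "Wm q p t Nk (map (\<lambda>z. z * t powi (- int k)) ys) (a * t powi (2 * int k))
         (b * t powi (int k)) nu (\<lambda>_. 0) = 0")
        case True
        then show ?thesis using IH by simp
      next
        case False
        have "pt Nk nu Nk = 0"
        proof (rule ccontr)
          assume "pt Nk nu Nk \<noteq> 0"
          moreover have "length (map (\<lambda>z. z * t powi (- int k)) ys) < Nk" using len Nk_def by simp
          ultimately show False using False Wm_vanish by blast
        qed
        then have W: "W1 q p t n x' a' b' lam nu = W1 q p t Nk x' a' b' lam nu"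
          if "b' = b * t powi int (length (ys @ ?T))" for x' a' b'
          unfolding that
          by (rule W1_restrict[OF Nkn lz' nz]) (simp_all add: Eb)
        have W': "W1 q p t n (y * t powi (- int (length (ys @ ?T)))) (a * t powi (2 * int (length (ys @ ?T))))
           (b * t powi int (length (ys @ ?T))) lam nu = W1 q p t Nk (y * t powi (- int (length (ys @ ?T)))) (a * t powi (2 * int (length (ys @ ?T))))
           (b * t powi int (length (ys @ ?T))) lam nu"
          by (rule W[OF refl])
        show ?thesis
          unfolding W' IH unfolding lT hx ha hb length_map by (simp add: mult.assoc)
      qed
    qed
    show "Wm q p t n ((y # ys) @ ?T) a b lam (\<lambda>_. 0)
     = Wm q p t (n - k) (map (\<lambda>z. z * t powi (- int k)) (y # ys)) (a * t powi (2 * int k))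
         (b * t powi (int k)) lam (\<lambda>_. 0)"
      unfolding append_Cons Wm.simps(2) list.map(2) Nk_def[symmetric] set
      by (rule sum.cong[OF refl termeq])
  qed
qed


theorem mainTheorem8:
  fixes n k :: nat and lam :: "nat \<Rightarrow> nat" and xs :: "complex list"
    and q p t a b :: complex
  assumes "norm p < 1"
    and "1 \<le> k" and "k \<le> n"
    and "\<forall>i. 1 \<le> i \<and> i < n \<longrightarrow> lam (Suc i) \<le> lam i"
    and "\<forall>i. n - k < i \<and> i \<le> n \<longrightarrow> lam i = 0"
    and "length xs = n - k"
    and "generic_params p q t a b xs"
  shows "Wm q p t n (xs @ map (\<lambda>j. t ^ (k - 1 - j)) [0..<k]) a b lam (\<lambda>_. 0)
       = Wm q p t (n - k) (map (\<lambda>z. z * t powi (- int k)) xs)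
            (a * t powi (2 * int k)) (b * t powi (int k)) lam (\<lambda>_. 0)"
proof -
  have tnz: "t \<noteq> 0" and bnz: "b \<noteq> 0" using assms(7) unfolding generic_params_def by auto
  have H: "\<forall>(r::int) (s::int) (\<alpha>::int) (\<beta>::int) (\<gamma>::nat \<Rightarrow> int) (m::int).
        (r \<noteq> 0 \<or> s \<noteq> 0 \<or> \<alpha> \<noteq> 0 \<or> \<beta> \<noteq> 0 \<or> (\<exists>i<length xs. \<gamma> i \<noteq> 0)) \<longrightarrow>
        q powi r * t powi s * a powi \<alpha> * b powi \<beta> * (\<Prod>i<length xs. (xs ! i) powi \<gamma> i) \<noteq> p powi m"
    using assms(7) unfolding generic_params_def by (elim conjE)
  have gen: "b * t powi S \<noteq> p powi m" for S m
  proof -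
    have "q powi 0 * t powi S * a powi 0 * b powi 1 * (\<Prod>i<length xs. (xs ! i) powi ((\<lambda>_. 0::int) i)) \<noteq> p powi m"
      using H[rule_format, of 0 S 0 1 "\<lambda>_. 0" m] by simp
    then show ?thesis by (simp add: mult.commute)
  qed
  have Eb: "Eth p (b * t powi s * t powi s') \<noteq> 0" for s s'
  proof -
    have eq: "b * t powi s * t powi s' = b * t powi (s + s')"
      using tnz by (simp add: power_int_add mult.assoc)
    show ?thesis unfolding eq
      by (rule Eth_nz[OF assms(1)]) (use tnz bnz gen in auto)
  qed
  show ?thesis
    using Wm_main[OF assms(1) tnz assms(3) Eb, of xs q a] assms(5,6) by simp
qed

end
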